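(* Let $H$ be a digraph (possibly with loops) and let $D$ be an $H$-colored quasi-transitive digraph. If $k \geq 4$, then $D$ has a $(k,H)$-kernel.
   Context: All digraphs are finite. A digraph $D$ is quasi-transitive if for all distinct $u,v\in V(D)$, whenever there is a directed $uv$-path of length $2$, $u$ and $v$ are joined by an arc (in some direction). $D$ has no loops and comes with a map $\rho: A(D)\to V(H)$. For a walk $W=(x_0,\ldots,x_n)$ in $D$, there is an obstruction on $x_i$ if $(\rho(x_{i-1},x_i),\rho(x_i,x_{i+1})) \notin A(H)$; for an open walk this is considered at internal vertices $x_i$, $1\le i\le n-1$, for a closed walk at all $i\in\{0,\ldots,n-1\}$ with indices modulo $n$. $O_H(W)$ is the set of indices with an obstruction; the $H$-length is $l_H(W)=|O_H(W)|+1$ for open $W$ and $|O_H(W)|$ for closed $W$. A $(k,H)$-kernel ($k\ge2$) is a set $S\subseteq V(D)$ such that for every two distinct $u,v\in S$ every directed $uv$-path in $D$ has $H$-length at least $k$, and for every $x\in V(D)\setminus S$ there is a directed path from $x$ to a vertex of $S$ of $H$-length at most $k-1$. *)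

theory Defs
  imports Main
begin

text \<open>The colouring is rho :: 'a \<times> 'a \<Rightarrow> 'c, only its values on A matter.\<close>

definition quasi_transitive :: "'a set \<Rightarrow> ('a \<times> 'a) set \<Rightarrow> bool" where
  "quasi_transitive V A \<longleftrightarrow>
     (\<forall>u\<in>V. \<forall>v\<in>V. \<forall>w\<in>V. u \<noteq> w \<and> (u, v) \<in> A \<and> (v, w) \<in> A \<longrightarrow> (u, w) \<in> A \<or> (w, u) \<in> A)"

definition is_path :: "('a \<times> 'a) set \<Rightarrow> 'a list \<Rightarrow> 'a \<Rightarrow> 'a \<Rightarrow> bool" where
  "is_path A xs u v \<longleftrightarrow> xs \<noteq> [] \<and> distinct xs \<and> hd xs = u \<and> last xs = v \<and>
     (\<forall>i. Suc i < length xs \<longrightarrow> (xs ! i, xs ! Suc i) \<in> A)"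

definition obstructions :: "('c \<times> 'c) set \<Rightarrow> ('a \<times> 'a \<Rightarrow> 'c) \<Rightarrow> 'a list \<Rightarrow> nat set" where
  "obstructions AH \<rho> xs =
     {i. 1 \<le> i \<and> Suc i < length xs \<and> (\<rho> (xs ! (i - 1), xs ! i), \<rho> (xs ! i, xs ! Suc i)) \<notin> AH}"

definition H_length :: "('c \<times> 'c) set \<Rightarrow> ('a \<times> 'a \<Rightarrow> 'c) \<Rightarrow> 'a list \<Rightarrow> nat" where
  "H_length AH \<rho> xs = card (obstructions AH \<rho> xs) + 1"

definition kH_kernel :: "'a set \<Rightarrow> ('a \<times> 'a) set \<Rightarrow> ('c \<times> 'c) set \<Rightarrow> ('a \<times> 'a \<Rightarrow> 'c) \<Rightarrow> nat \<Rightarrow> 'a set \<Rightarrow> bool" where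
  "kH_kernel V A AH \<rho> k S \<longleftrightarrow> S \<subseteq> V \<and>
     (\<forall>u\<in>S. \<forall>v\<in>S. u \<noteq> v \<longrightarrow> (\<forall>xs. is_path A xs u v \<longrightarrow> H_length AH \<rho> xs \<ge> k)) \<and>
     (\<forall>x\<in>V - S. \<exists>v\<in>S. \<exists>xs. is_path A xs x v \<and> H_length AH \<rho> xs \<le> k - 1)"

end

theory Submission
  imports Defs
begin

definition Cr :: "('a \<times> 'a) set \<Rightarrow> ('c \<times> 'c) set \<Rightarrow> ('a \<times> 'a \<Rightarrow> 'c) \<Rightarrow> nat \<Rightarrow> 'a \<Rightarrow> 'a \<Rightarrow> bool" where
  "Cr A AH \<rho> k u v \<longleftrightarrow> (\<exists>xs. is_path A xs u v \<and> H_length AH \<rho> xs \<le> k - 1)"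

lemma H_le:
  assumes "length xs \<ge> 2"
  shows "H_length AH \<rho> xs \<le> length xs - 1"
proof -
  have "obstructions AH \<rho> xs \<subseteq> {1..<length xs - 1}" by (auto simp: obstructions_def)
  hence "card (obstructions AH \<rho> xs) \<le> card {1..<length xs - 1}"
    by (intro card_mono) auto
  thus ?thesis using assms by (simp add: H_length_def)
qed

lemma walk_reach:
  "xs \<noteq> [] \<Longrightarrow> (\<forall>i. Suc i < length xs \<longrightarrow> (xs!i, xs!Suc i) \<in> A) \<Longrightarrow> (hd xs, last xs) \<in> A\<^sup>*"
proof (induction xs)
  case Nil then show ?case by simp
next
  case (Cons x xs)
  show ?case
  proof (cases xs)
    case Nil then show ?thesis by simp
  next
    case (Cons y ys)
    have xy: "(x, y) \<in> A" using Cons.prems(2)[rule_format, of 0] Cons by simp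
    have "\<forall>i. Suc i < length xs \<longrightarrow> (xs!i, xs!Suc i) \<in> A"
    proof (intro allI impI)
      fix i assume "Suc i < length xs"
      then show "(xs!i, xs!Suc i) \<in> A" using Cons.prems(2)[rule_format, of "Suc i"] by simp
    qed
    then have "(hd xs, last xs) \<in> A\<^sup>*" using Cons.IH Cons by simp
    then show ?thesis using xy Cons by (simp add: converse_rtrancl_into_rtrancl)
  qed
qed

lemma Cr_trancl:
  assumes "Cr A AH \<rho> k u v" "u \<noteq> v" shows "(u, v) \<in> A\<^sup>+"
proof -
  obtain xs where "is_path A xs u v" using assms unfolding Cr_def by blast
  then have "(u, v) \<in> A\<^sup>*" using walk_reach[of xs A] unfolding is_path_def by auto
  then show ?thesis using assms(2) by (simp add: rtrancl_eq_or_trancl)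
qed

lemma walk_sub:
  assumes "\<forall>i<n. (f i, f (Suc i)) \<in> A" "i \<le> j" "j \<le> n"
  shows "(f i, f j) \<in> A ^^ (j - i)"
  using assms(2,3)
proof (induction j)
  case 0 then show ?case by simp
next
  case (Suc j)
  show ?case
  proof (cases "i = Suc j")
    case True then show ?thesis by simp
  next
    case False
    then have ij: "i \<le> j" using Suc by simp
    then have "(f i, f j) \<in> A^^(j-i)" using Suc by simp
    moreover have "(f j, f (Suc j)) \<in> A" using Suc assms(1) by simp
    ultimately have "(f i, f (Suc j)) \<in> A^^Suc (j-i)" by (rule relpow_Suc_I)
    moreover have "Suc (j - i) = Suc j - i" using ij by simp
    ultimately show ?thesis by simp
  qed
qed

lemma min_walk:
  assumes "(u, v) \<in> A ^^ n"
  obtains m f where "m \<le> n" "f 0 = u" "f m = v" "\<forall>i<m. (f i, f (Suc i)) \<in> A"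
    "\<forall>m'<m. (u, v) \<notin> A ^^ m'"
proof -
  define m where "m = (LEAST m. (u, v) \<in> A ^^ m)"
  have m1: "(u, v) \<in> A ^^ m" unfolding m_def using assms by (rule LeastI)
  have m2: "m \<le> n" unfolding m_def using assms by (rule Least_le)
  have m3: "\<forall>m'<m. (u, v) \<notin> A ^^ m'" unfolding m_def using not_less_Least by blast
  from m1 obtain f where "f 0 = u" "f m = v" "\<forall>i<m. (f i, f (Suc i)) \<in> A"
    using relpow_fun_conv by metis
  then show ?thesis using that m2 m3 by blast
qed

lemma min_walk_inj:
  assumes w: "f 0 = u" "f m = v" "\<forall>i<m. (f i, f (Suc i)) \<in> A" "\<forall>m'<m. (u, v) \<notin> A ^^ m'"
    and ij: "i < j" "j \<le> m"
  shows "f i \<noteq> f j"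
proof
  assume eq: "f i = f j"
  have "(u, f i) \<in> A ^^ (i - 0)" using walk_sub[OF w(3), of 0 i] ij w(1) by simp
  moreover have "(f j, v) \<in> A ^^ (m - j)" using walk_sub[OF w(3), of j m] ij w(2) by simp
  ultimately have "(u, v) \<in> A ^^ i O A ^^ (m - j)" using eq by auto
  then have "(u, v) \<in> A ^^ (i + (m - j))" by (simp add: relpow_add)
  moreover have "i + (m - j) < m" using ij by simp
  ultimately show False using w(4) by blast
qed

lemma min_walk_nofwd:
  assumes w: "f 0 = u" "f m = v" "\<forall>i<m. (f i, f (Suc i)) \<in> A" "\<forall>m'<m. (u, v) \<notin> A ^^ m'"
    and ij: "i + 2 \<le> j" "j \<le> m"
  shows "(f i, f j) \<notin> A"
proof
  assume a: "(f i, f j) \<in> A"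
  have "(u, f i) \<in> A ^^ (i - 0)" using walk_sub[OF w(3), of 0 i] ij w(1) by simp
  then have "(u, f j) \<in> A ^^ Suc i" using a by (auto intro: relpow_Suc_I)
  moreover have "(f j, v) \<in> A ^^ (m - j)" using walk_sub[OF w(3), of j m] ij w(2) by simp
  ultimately have "(u, v) \<in> A ^^ Suc i O A ^^ (m - j)" by auto
  then have "(u, v) \<in> A ^^ (Suc i + (m - j))" by (simp only: relpow_add)
  moreover have "Suc i + (m - j) < m" using ij by simp
  ultimately show False using w(4) by blast
qed

lemma walk_Cr:
  assumes "(u, v) \<in> A ^^ n" "u \<noteq> v" "n \<le> k - 1"
  shows "Cr A AH \<rho> k u v"
proof -
  obtain m f where w: "m \<le> n" "f 0 = u" "f m = v" "\<forall>i<m. (f i, f (Suc i)) \<in> A"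
    "\<forall>m'<m. (u, v) \<notin> A ^^ m'"
    using min_walk[OF assms(1)] by metis
  have m0: "m \<noteq> 0" using w(2,3) assms(2) by (cases m) auto
  define xs where "xs = map f [0..<Suc m]"
  have len: "length xs = Suc m" by (simp add: xs_def)
  have nth: "\<And>i. i < Suc m \<Longrightarrow> xs ! i = f i" by (simp add: xs_def del: upt_Suc)
  have inj: "inj_on f {0..<Suc m}"
  proof (rule inj_onI)
    fix i j assume "i \<in> {0..<Suc m}" "j \<in> {0..<Suc m}" "f i = f j"
    then show "i = j" using min_walk_inj[OF w(2-5), of i j] min_walk_inj[OF w(2-5), of j i]
      by (metis atLeastLessThan_iff less_Suc_eq_le nat_neq_iff)
  qed
  have "is_path A xs u v"
    unfolding is_path_def
  proof (intro conjI allI impI)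
    show "xs \<noteq> []" using len by auto
    show "distinct xs" unfolding xs_def using inj by (simp add: distinct_map del: upt_Suc)
    have ne: "xs \<noteq> []" using len by auto
    show "hd xs = u" using nth[of 0] len w(2) hd_conv_nth[OF ne] by simp
    show "last xs = v" using nth[of m] len w(3) last_conv_nth[OF ne] by simp
    fix i assume "Suc i < length xs"
    then show "(xs ! i, xs ! Suc i) \<in> A" using nth[of i] nth[of "Suc i"] len w(4) by simp
  qed
  moreover have "H_length AH \<rho> xs \<le> k - 1" using H_le[of xs AH \<rho>] len m0 w(1) assms(3) by simp
  ultimately show ?thesis unfolding Cr_def by blast
qed


context
  fixes V :: "'a set" and A :: "('a \<times> 'a) set" and AH :: "('c \<times> 'c) set"
    and \<rho> :: "'a \<times> 'a \<Rightarrow> 'c" and k :: nat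
  assumes AV: "A \<subseteq> V \<times> V" and QT: "quasi_transitive V A" and nl: "\<forall>x. (x, x) \<notin> A"
    and k4: "k \<ge> 4"
begin

lemma qt: "(a, b) \<in> A \<Longrightarrow> (b, c) \<in> A \<Longrightarrow> a \<noteq> c \<Longrightarrow> (a, c) \<in> A \<or> (c, a) \<in> A"
  using QT AV unfolding quasi_transitive_def by blast

lemma arc_Cr: assumes ab: "(a, b) \<in> A" shows "Cr A AH \<rho> k a b"
proof -
  have "a \<noteq> b" using ab nl by auto
  moreover have "(a, b) \<in> A ^^ 1" using ab by simp
  ultimately show ?thesis using walk_Cr[where u=a and v=b and A=A and n=1 and k=k and AH=AH and \<rho>=\<rho>] k4 by auto
qed

lemma two_Cr: "(a, b) \<in> A \<Longrightarrow> (b, c) \<in> A \<Longrightarrow> a \<noteq> c \<Longrightarrow> Cr A AH \<rho> k a c"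
proof -
  assume "(a, b) \<in> A" "(b, c) \<in> A" "a \<noteq> c"
  then have "(a, c) \<in> A ^^ 2" by (auto simp: numeral_2_eq_2)
  then show ?thesis using walk_Cr[where u=a and v=c and A=A and n=2 and k=k and AH=AH and \<rho>=\<rho>] \<open>a \<noteq> c\<close> k4 by auto
qed

lemma BJH:
  assumes uv: "u \<noteq> v" "(u, v) \<in> A\<^sup>+" and nC: "\<not> Cr A AH \<rho> k u v"
  shows "(v, u) \<in> A"
proof -
  from uv(2) obtain n where "(u, v) \<in> A ^^ n" by (auto simp: trancl_power)
  then obtain m f where w: "m \<le> n" "f 0 = u" "f m = v" "\<forall>i<m. (f i, f (Suc i)) \<in> A"
    "\<forall>m'<m. (u, v) \<notin> A ^^ m'"
    using min_walk by metis
  have "(u, v) \<in> A ^^ m" using w(2-4) relpow_fun_conv by metis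
  then have m4: "m \<ge> 4" using walk_Cr[where u=u and v=v and A=A and n=m and k=k and AH=AH and \<rho>=\<rho>] nC uv(1) k4 by fastforce
  have inj: "\<And>i j. i < j \<Longrightarrow> j \<le> m \<Longrightarrow> f i \<noteq> f j" using min_walk_inj[OF w(2-5)] by blast
  have nf: "\<And>i j. i + 2 \<le> j \<Longrightarrow> j \<le> m \<Longrightarrow> (f i, f j) \<notin> A"
    using min_walk_nofwd[OF w(2-5)] by blast
  have P: "\<And>i j y. i + 2 \<le> j \<Longrightarrow> j \<le> m \<Longrightarrow> (f j, y) \<in> A \<Longrightarrow> (y, f i) \<in> A \<Longrightarrow> (f j, f i) \<in> A"
  proof -
    fix i j y assume a: "i + 2 \<le> j" "j \<le> m" "(f j, y) \<in> A" "(y, f i) \<in> A"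
    have "f j \<noteq> f i" using inj[of i j] a by simp
    then show "(f j, f i) \<in> A" using qt[OF a(3,4)] nf[OF a(1,2)] by blast
  qed
  have two: "\<And>i. i + 2 \<le> m \<Longrightarrow> (f (i + 2), f i) \<in> A"
  proof -
    fix i assume a: "i + 2 \<le> m"
    have "(f i, f (Suc i)) \<in> A" "(f (Suc i), f (i + 2)) \<in> A" using w(4) a by auto
    moreover have "f i \<noteq> f (i + 2)" using inj[of i "i+2"] a by simp
    ultimately show "(f (i + 2), f i) \<in> A" using qt[of "f i" "f (Suc i)" "f (i+2)"] nf[of i "i+2"] a by blast
  qed
  have f4: "(f 4, f 0) \<in> A" using P[of 0 4 "f 2"] two[of 2] two[of 0] m4 by (simp add: eval_nat_numeral)
  have f3: "(f 3, f 0) \<in> A" using P[of 0 3 "f 4"] f4 w(4) m4 by (simp add: numeral_eq_Suc)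
  have "\<forall>j. 2 \<le> j \<longrightarrow> j \<le> m \<longrightarrow> (f j, f 0) \<in> A"
  proof (intro allI)
    fix j show "2 \<le> j \<longrightarrow> j \<le> m \<longrightarrow> (f j, f 0) \<in> A"
    proof (induction j rule: less_induct)
      case (less j)
      show ?case
      proof (intro impI)
        assume j: "2 \<le> j" "j \<le> m"
        consider "j = 2" | "j = 3" | "j \<ge> 4" using j by linarith
        then show "(f j, f 0) \<in> A"
        proof cases
          case 1 then show ?thesis using two[of 0] j by (simp add: eval_nat_numeral)
        next
          case 2 then show ?thesis using f3 by simp
        next
          case 3
          have "(f (j - 2), f 0) \<in> A" using less.IH[of "j-2"] 3 j by simp
          moreover have "j - 2 + 2 = j" using 3 by simp
          then have "(f j, f (j - 2)) \<in> A" using two[of "j-2"] 3 j by metis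
          ultimately show ?thesis using P[of 0 j "f (j-2)"] 3 j by simp
        qed
      qed
    qed
  qed
  then have "(f m, f 0) \<in> A" using m4 by simp
  then show ?thesis using w(2,3) by simp
qed

lemma sink:
  assumes fin: "finite Q" and ne: "Q \<noteq> {}" and QV: "Q \<subseteq> V"
    and mut: "\<forall>x\<in>Q. \<forall>y\<in>Q. x \<noteq> y \<longrightarrow> (x, y) \<in> A\<^sup>+"
  shows "\<exists>v\<in>Q. \<forall>u\<in>Q. u \<noteq> v \<longrightarrow> Cr A AH \<rho> k u v"
proof (rule ccontr)
  assume "\<not> ?thesis"
  hence "\<forall>v\<in>Q. \<exists>u. u \<in> Q \<and> u \<noteq> v \<and> \<not> Cr A AH \<rho> k u v" by blast
  then obtain g where g: "\<forall>v\<in>Q. g v \<in> Q \<and> g v \<noteq> v \<and> \<not> Cr A AH \<rho> k (g v) v" by metis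
  have gA: "\<forall>v\<in>Q. (v, g v) \<in> A"
  proof
    fix v assume v: "v \<in> Q"
    then have "g v \<in> Q" "g v \<noteq> v" "\<not> Cr A AH \<rho> k (g v) v" using g by auto
    moreover then have "(g v, v) \<in> A\<^sup>+" using mut v by blast
    ultimately show "(v, g v) \<in> A" using BJH by blast
  qed
  obtain v0 where v0: "v0 \<in> Q" using ne by blast
  define s where "s n = (g ^^ n) v0" for n
  have sQ: "s n \<in> Q" for n by (induction n) (auto simp: s_def v0 g)
  have sS: "s (Suc n) = g (s n)" for n by (simp add: s_def)
  have arc1: "(s n, s (Suc n)) \<in> A" for n using gA sQ sS by simp
  have nC: "\<not> Cr A AH \<rho> k (s (Suc n)) (s n)" for n using g sQ sS by simp
  have key: "\<forall>i<m. (s i, s m) \<in> A" for m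
  proof (induction m)
    case 0 then show ?case by simp
  next
    case (Suc m)
    have "\<forall>d. d \<le> m \<longrightarrow> (s (m - d), s (Suc m)) \<in> A"
    proof (intro allI)
      fix d show "d \<le> m \<longrightarrow> (s (m - d), s (Suc m)) \<in> A"
      proof (induction d)
        case 0 then show ?case using arc1[of m] by simp
      next
        case (Suc d)
        show ?case
        proof
          assume dm: "Suc d \<le> m"
          define i where "i = m - Suc d"
          have si: "Suc i = m - d" using dm i_def by simp
          have h1: "(s (Suc i), s (Suc m)) \<in> A" using Suc.IH dm si by simp
          have h2: "(s i, s m) \<in> A" using Suc.prems dm i_def \<open>\<forall>i<m. (s i, s m) \<in> A\<close> by simp
          have ne1: "s (Suc m) \<noteq> s i"
          proof
            assume "s (Suc m) = s i"
            then have "(s (Suc i), s i) \<in> A" using h1 by simp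
            then have "Cr A AH \<rho> k (s (Suc i)) (s i)" by (rule arc_Cr)
            then show False using nC[of i] by simp
          qed
          have "(s (Suc m), s i) \<notin> A"
          proof
            assume "(s (Suc m), s i) \<in> A"
            moreover have "s (Suc i) \<noteq> s i" using arc1[of i] nl by metis
            ultimately have "Cr A AH \<rho> k (s (Suc i)) (s i)" using two_Cr[OF h1] by blast
            then show False using nC[of i] by simp
          qed
          moreover have "s i \<noteq> s (Suc m)" using ne1 by simp
          ultimately have "(s i, s (Suc m)) \<in> A" using qt[OF h2 arc1[of m]] by blast
          then show "(s (m - Suc d), s (Suc m)) \<in> A" by (simp add: i_def)
        qed
      qed
    qed
    then show ?case
    proof (intro allI impI)
      fix i assume all: "\<forall>d. d \<le> m \<longrightarrow> (s (m - d), s (Suc m)) \<in> A" and i: "i < Suc m"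
      then have "(s (m - (m - i)), s (Suc m)) \<in> A" using all[rule_format, of "m - i"] by simp
      moreover have "m - (m - i) = i" using i by simp
      ultimately show "(s i, s (Suc m)) \<in> A" by simp
    qed
  qed
  have "inj s"
  proof (rule injI)
    fix x y assume "s x = s y"
    show "x = y"
    proof (rule ccontr)
      assume "x \<noteq> y"
      then consider "x < y" | "y < x" by linarith
      then show False
      proof cases
        case 1 then have "(s x, s y) \<in> A" using key by blast
        then show False using \<open>s x = s y\<close> nl by simp
      next
        case 2 then have "(s y, s x) \<in> A" using key by blast
        then show False using \<open>s x = s y\<close> nl by simp
      qed
    qed
  qed
  moreover have "finite (range s)" using sQ fin by (metis finite_subset image_subsetI)
  ultimately show False using finite_imageD by blast
qed

lemma main:
  assumes "finite W" "W \<subseteq> V"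
  shows "\<exists>S\<subseteq>W. (\<forall>u\<in>S. \<forall>v\<in>S. u \<noteq> v \<longrightarrow> \<not> Cr A AH \<rho> k u v) \<and>
           (\<forall>x\<in>W - S. \<exists>v\<in>S. Cr A AH \<rho> k x v)"
  using assms
proof (induction W rule: finite_psubset_induct)
  case (psubset W)
  show ?case
  proof (cases "W = {}")
    case True then show ?thesis by auto
  next
    case False
    define Anc where "Anc x = {y\<in>W. (y, x) \<in> A\<^sup>*}" for x
    have finAnc: "finite (Anc x)" for x using psubset.hyps unfolding Anc_def by auto
    define c where "c = Min ((\<lambda>x. card (Anc x)) ` W)"
    have "c \<in> (\<lambda>x. card (Anc x)) ` W" unfolding c_def using False psubset.hyps by (intro Min_in) auto
    then obtain x0 where x0: "x0 \<in> W" "card (Anc x0) = c" by auto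
    have x0min: "\<And>x. x \<in> W \<Longrightarrow> card (Anc x0) \<le> card (Anc x)"
      unfolding x0(2) c_def using psubset.hyps by (intro Min_le) auto
    define Q where "Q = {x\<in>W. (x0, x) \<in> A\<^sup>* \<and> (x, x0) \<in> A\<^sup>*}"
    have x0Q: "x0 \<in> Q" unfolding Q_def using x0 by auto
    have backw: "\<And>y z. y \<in> W \<Longrightarrow> z \<in> Q \<Longrightarrow> (y, z) \<in> A\<^sup>* \<Longrightarrow> y \<in> Q"
    proof -
      fix y z assume y: "y \<in> W" "z \<in> Q" "(y, z) \<in> A\<^sup>*"
      have yx0: "(y, x0) \<in> A\<^sup>*" using y unfolding Q_def by auto
      have sub: "Anc y \<subseteq> Anc x0" unfolding Anc_def using yx0 by auto
      have c1: "card (Anc x0) \<le> card (Anc y)" by (rule x0min[OF y(1)])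
      have c2: "card (Anc y) \<le> card (Anc x0)" by (rule card_mono[OF finAnc sub])
      have "card (Anc y) = card (Anc x0)" using c1 c2 by (rule antisym[rotated])
      then have "Anc y = Anc x0" by (rule card_subset_eq[OF finAnc sub])
      moreover have "x0 \<in> Anc x0" unfolding Anc_def using x0 by auto
      ultimately have "(x0, y) \<in> A\<^sup>*" unfolding Anc_def by auto
      then show "y \<in> Q" unfolding Q_def using y(1) yx0 by auto
    qed
    have WQ1: "W - Q \<subset> W" using x0Q x0 by auto
    have WQ2: "W - Q \<subseteq> V" using psubset.prems by auto
    have "\<exists>S\<subseteq>W - Q. (\<forall>u\<in>S. \<forall>v\<in>S. u \<noteq> v \<longrightarrow> \<not> Cr A AH \<rho> k u v) \<and>
           (\<forall>x\<in>(W - Q) - S. \<exists>v\<in>S. Cr A AH \<rho> k x v)"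
      by (rule psubset.IH[OF WQ1 WQ2])
    then obtain S' where S': "S' \<subseteq> W - Q"
      "\<forall>u\<in>S'. \<forall>v\<in>S'. u \<noteq> v \<longrightarrow> \<not> Cr A AH \<rho> k u v"
      "\<forall>x\<in>(W - Q) - S'. \<exists>v\<in>S'. Cr A AH \<rho> k x v"
      by (elim exE conjE) simp
    define Q' where "Q' = {x\<in>Q. \<not> (\<exists>s\<in>S'. Cr A AH \<rho> k x s)}"
    show ?thesis
    proof (cases "Q' = {}")
      case True
      have "\<forall>x\<in>W - S'. \<exists>v\<in>S'. Cr A AH \<rho> k x v"
      proof
        fix x assume x: "x \<in> W - S'"
        show "\<exists>v\<in>S'. Cr A AH \<rho> k x v"
        proof (cases "x \<in> Q")
          case True then show ?thesis using \<open>Q' = {}\<close> unfolding Q'_def by auto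
        next
          case False then show ?thesis using x S'(3) by auto
        qed
      qed
      then show ?thesis using S' by blast
    next
      case False
      have finQ': "finite Q'" using psubset.hyps unfolding Q'_def Q_def by auto
      have Q'V: "Q' \<subseteq> V" using psubset.prems unfolding Q'_def Q_def by auto
      have mut: "\<forall>x\<in>Q'. \<forall>y\<in>Q'. x \<noteq> y \<longrightarrow> (x, y) \<in> A\<^sup>+"
      proof (intro ballI impI)
        fix x y assume "x \<in> Q'" "y \<in> Q'" "x \<noteq> y"
        then have "(x, x0) \<in> A\<^sup>*" "(x0, y) \<in> A\<^sup>*" unfolding Q'_def Q_def by auto
        then have "(x, y) \<in> A\<^sup>*" by simp
        then show "(x, y) \<in> A\<^sup>+" using \<open>x \<noteq> y\<close> by (simp add: rtrancl_eq_or_trancl)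
      qed
      obtain v where v: "v \<in> Q'" "\<forall>u\<in>Q'. u \<noteq> v \<longrightarrow> Cr A AH \<rho> k u v"
        using sink[OF finQ' False Q'V mut] by blast
      define S where "S = insert v S'"
      have "S \<subseteq> W" using v S'(1) unfolding S_def Q'_def Q_def by auto
      moreover have "\<forall>u\<in>S. \<forall>w\<in>S. u \<noteq> w \<longrightarrow> \<not> Cr A AH \<rho> k u w"
      proof (intro ballI impI)
        fix u w assume u: "u \<in> S" "w \<in> S" "u \<noteq> w"
        show "\<not> Cr A AH \<rho> k u w"
        proof (cases "u = v")
          case True
          then have "w \<in> S'" using u unfolding S_def by auto
          then show ?thesis using True v(1) unfolding Q'_def by auto
        next
          case uv: False
          then have uS: "u \<in> S'" using u unfolding S_def by auto
          show ?thesis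
          proof (cases "w = v")
            case False
            then have "w \<in> S'" using u unfolding S_def by auto
            then show ?thesis using uS S'(2) u(3) by blast
          next
            case True
            show ?thesis
            proof
              assume "Cr A AH \<rho> k u w"
              then have "(u, w) \<in> A\<^sup>+" using u(3) by (rule Cr_trancl)
              then have "(u, v) \<in> A\<^sup>+" using True by simp
              then have "(u, v) \<in> A\<^sup>*" by simp
              moreover have "u \<in> W" "v \<in> Q" using uS S'(1) v(1) unfolding Q'_def by auto
              ultimately have "u \<in> Q" using backw by blast
              then show False using uS S'(1) by auto
            qed
          qed
        qed
      qed
      moreover have "\<forall>x\<in>W - S. \<exists>w\<in>S. Cr A AH \<rho> k x w"
      proof
        fix x assume x: "x \<in> W - S"
        show "\<exists>w\<in>S. Cr A AH \<rho> k x w"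
        proof (cases "x \<in> Q")
          case True
          show ?thesis
          proof (cases "x \<in> Q'")
            case True
            then have "Cr A AH \<rho> k x v" using v x unfolding S_def by auto
            then show ?thesis unfolding S_def by auto
          next
            case False
            then obtain s where "s \<in> S'" "Cr A AH \<rho> k x s" using \<open>x \<in> Q\<close> unfolding Q'_def by auto
            then show ?thesis unfolding S_def by auto
          qed
        next
          case False
          then have "x \<in> (W - Q) - S'" using x unfolding S_def by auto
          then obtain s where "s \<in> S'" "Cr A AH \<rho> k x s" using S'(3) by blast
          then show ?thesis unfolding S_def by auto
        qed
      qed
      ultimately show ?thesis by blast
    qed
  qed
qed

end

theorem theorem16:
  fixes V :: "'a set" and A :: "('a \<times> 'a) set"
    and VH :: "'c set" and AH :: "('c \<times> 'c) set"
    and \<rho> :: "'a \<times> 'a \<Rightarrow> 'c" and k :: nat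
  assumes "finite V" and "A \<subseteq> V \<times> V" and "\<forall>x. (x, x) \<notin> A"
    and "finite VH" and "AH \<subseteq> VH \<times> VH"
    and "\<forall>e\<in>A. \<rho> e \<in> VH"
    and "quasi_transitive V A"
    and "k \<ge> 4"
  shows "\<exists>S. kH_kernel V A AH \<rho> k S"
proof -
  have "\<exists>S\<subseteq>V. (\<forall>u\<in>S. \<forall>v\<in>S. u \<noteq> v \<longrightarrow> \<not> Cr A AH \<rho> k u v) \<and>
           (\<forall>x\<in>V - S. \<exists>v\<in>S. Cr A AH \<rho> k x v)"
    by (rule main[OF assms(2) assms(7) assms(3) assms(8) assms(1) order_refl])
  then obtain S where S: "S \<subseteq> V" "\<forall>u\<in>S. \<forall>v\<in>S. u \<noteq> v \<longrightarrow> \<not> Cr A AH \<rho> k u v"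
    "\<forall>x\<in>V - S. \<exists>v\<in>S. Cr A AH \<rho> k x v"
    by (elim exE conjE) simp
  have "kH_kernel V A AH \<rho> k S"
    unfolding kH_kernel_def
  proof (intro conjI ballI impI allI)
    show "S \<subseteq> V" by (rule S(1))
  next
    fix u v xs assume "u \<in> S" "v \<in> S" "u \<noteq> v" "is_path A xs u v"
    then show "H_length AH \<rho> xs \<ge> k" using S(2) unfolding Cr_def by force
  next
    fix x assume "x \<in> V - S"
    then show "\<exists>v\<in>S. \<exists>xs. is_path A xs x v \<and> H_length AH \<rho> xs \<le> k - 1"
      using S(3) unfolding Cr_def by blast
  qed
  then show ?thesis by blast
qed

end
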